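(* Let $f$ be an $n$-variable Boolean function. Then $\min({FAI}(f),{FAI}(1+f))\le 2\,{AI}(f)$.
   Context: An $n$-variable Boolean function is a map $\mathbb{F}_2^n\to\mathbb{F}_2$, with algebraic degree $\deg$ the degree of its algebraic normal form. ${LDA}(h)$ is the minimum algebraic degree of a nonzero $g$ with $h\cdot g=0$; ${AI}(f)=\min({LDA}(f),{LDA}(1+f))$. ${AN}^c(f)$ is the set of $g$ with $f\cdot g\neq0$, and ${FAI}(f)$ is the minimum of $\deg(g)+\deg(f\cdot g)$ over $g\in{AN}^c(f)$, $g\neq 1$. *)

theory Defs
  imports Main "HOL-Library.Extended_Nat"
begin

text \<open>An n-variable Boolean function F_2^n -> F_2 is modelled as a map
  f :: 'n set => bool, where 'n is a finite type with n = CARD('n) elements: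
  a vector x in F_2^n is identified with its support (a subset of the index type),
  and the value True stands for 1 in F_2.\<close>

type_synonym 'n bfun = "'n set \<Rightarrow> bool"

text \<open>Coefficient of the monomial prod_{i in S} x_i in the algebraic normal form
  (binary Moebius transform): a_S = sum over T subset of S of f(T), mod 2.\<close>
definition anf_coeff :: "'n::finite bfun \<Rightarrow> 'n set \<Rightarrow> bool" where
  "anf_coeff f S = odd (card {T. T \<subseteq> S \<and> f T})"

text \<open>Algebraic degree: largest size of a monomial occurring in the ANF
  (the zero function gets degree 0 by convention).\<close>
definition alg_deg :: "'n::finite bfun \<Rightarrow> nat" where
  "alg_deg f = Max (insert 0 (card ` {S. anf_coeff f S}))"

text \<open>Pointwise product (AND) and sum with the constant 1 (negation).\<close>
definition bmult :: "'n bfun \<Rightarrow> 'n bfun \<Rightarrow> 'n bfun" where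
  "bmult h g = (\<lambda>x. h x \<and> g x)"

definition bcompl :: "'n bfun \<Rightarrow> 'n bfun" where
  "bcompl f = (\<lambda>x. \<not> f x)"

text \<open>LDA(h): minimum algebraic degree of a nonzero g with h*g = 0
  (infinity if no such g exists).\<close>
definition LDA :: "'n::finite bfun \<Rightarrow> enat" where
  "LDA h = (INF g\<in>{g. g \<noteq> (\<lambda>_. False) \<and> bmult h g = (\<lambda>_. False)}. enat (alg_deg g))"

definition AI :: "'n::finite bfun \<Rightarrow> enat" where
  "AI f = min (LDA f) (LDA (bcompl f))"

definition ANc :: "'n::finite bfun \<Rightarrow> 'n bfun set" where
  "ANc f = {g. bmult f g \<noteq> (\<lambda>_. False)}"

definition FAI :: "'n::finite bfun \<Rightarrow> enat" where
  "FAI f = (INF g\<in>{g. g \<in> ANc f \<and> g \<noteq> (\<lambda>_. True)}.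
              enat (alg_deg g + alg_deg (bmult f g)))"

end

theory Submission
  imports Defs
begin

lemma inf_attain:
  fixes h :: "'a \<Rightarrow> nat"
  assumes "S \<noteq> {}"
  shows "\<exists>g\<in>S. (INF g\<in>S. enat (h g)) = enat (h g)"
proof -
  have ne: "(\<lambda>g. enat (h g)) ` S \<noteq> {}" using assms by auto
  have "Inf ((\<lambda>g. enat (h g)) ` S) \<in> (\<lambda>g. enat (h g)) ` S"
    unfolding Inf_enat_def using ne by (auto intro: LeastI)
  then show ?thesis by auto
qed

lemma half:
  fixes f :: "'n::finite set \<Rightarrow> bool"
  assumes "f \<noteq> (\<lambda>_. True)"
  shows "FAI f \<le> 2 * LDA (bcompl f)"
proof (cases "{g. g \<noteq> (\<lambda>_. False) \<and> bmult (bcompl f) g = (\<lambda>_. False)} = {}")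
  case True
  then have "LDA (bcompl f) = \<infinity>" unfolding LDA_def by (simp only: image_empty Inf_empty) (simp add: top_enat_def)
  moreover have "(2::enat) * \<infinity> = \<infinity>" by (rule imult_infinity_right) simp
  ultimately show ?thesis by simp
next
  case False
  then obtain g where g: "g \<noteq> (\<lambda>_. False)" "bmult (bcompl f) g = (\<lambda>_. False)"
    and eq: "LDA (bcompl f) = enat (alg_deg g)"
    using inf_attain[OF False, of alg_deg] unfolding LDA_def by blast
  have pt: "\<And>x. g x \<Longrightarrow> f x"
  proof -
    fix x assume "g x"
    have "bmult (bcompl f) g x = False" using g(2) by simp
    then show "f x" using \<open>g x\<close> unfolding bmult_def bcompl_def by simp
  qed
  have fg: "bmult f g = g"
    unfolding bmult_def using pt by (intro ext) blast
  have g1: "g \<noteq> (\<lambda>_. True)"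
  proof
    assume "g = (\<lambda>_. True)"
    then have "f = (\<lambda>_. True)" using pt by (intro ext) simp
    then show False using assms by simp
  qed
  have "g \<in> {g. g \<in> ANc f \<and> g \<noteq> (\<lambda>_. True)}"
    using fg g(1) g1 unfolding ANc_def by simp
  then have "FAI f \<le> enat (alg_deg g + alg_deg (bmult f g))"
    unfolding FAI_def by (rule INF_lower)
  also have "\<dots> = enat (alg_deg g) + enat (alg_deg g)" using fg by simp
  also have "\<dots> = 2 * LDA (bcompl f)" unfolding eq by (rule mult_2[symmetric])
  finally show ?thesis .
qed

theorem corollary1:
  fixes f :: "'n::finite set \<Rightarrow> bool"
  assumes "f \<noteq> (\<lambda>_. False)" and "f \<noteq> (\<lambda>_. True)"
  shows "min (FAI f) (FAI (bcompl f)) \<le> 2 * AI f"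
proof -
  have cc: "bcompl (bcompl f) = f" unfolding bcompl_def by simp
  have nt: "bcompl f \<noteq> (\<lambda>_. True)" 
  proof
    assume "bcompl f = (\<lambda>_. True)"
    then have "\<And>x. \<not> f x" unfolding bcompl_def by metis
    then show False using assms(1) by blast
  qed
  have a: "FAI f \<le> 2 * LDA (bcompl f)" using half[OF assms(2)] .
  have b: "FAI (bcompl f) \<le> 2 * LDA f" using half[OF nt] cc by simp
  show ?thesis
  proof (cases "LDA f \<le> LDA (bcompl f)")
    case True
    then have "min (LDA f) (LDA (bcompl f)) = LDA f" by (rule min_absorb1)
    then show ?thesis using b unfolding AI_def by (metis min.coboundedI2)
  next
    case False
    then have "min (LDA f) (LDA (bcompl f)) = LDA (bcompl f)" by simp
    then show ?thesis using a unfolding AI_def by (metis min.coboundedI1)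
  qed
qed

end
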